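(* Let $k\ge 2$ and $2\le r\le k$ be integers, let $T=3^{k-r+1}$ and $M=3^{r-1}$, and let $S=(\mathcal{P},\mathcal{B})$ be a Steiner triple system on $|\mathcal{P}|=3^k$ points whose $3$-rank is at most $3^k-r$. Fix a decomposition of $S$ of the form described in the context (groups $G_x$, $x\in AG(r-1,3)$, sub-systems $\mathcal{B}_x$ and transversal designs $\mathcal{B}_\ell$). Suppose that (i) for every point $x$ of $AG(r-1,3)$, the Steiner triple system $(G_x,\mathcal{B}_x)$ on $T$ points is resolvable, and (ii) for every line $\ell$ of $AG(r-1,3)$, the Latin square of order $T$ corresponding to the transversal design $\mathcal{B}_\ell$ has an orthogonal mate. Then $S$ is resolvable, i.e. $\mathcal{B}$ can be partitioned into $\frac{3^k-1}{2}$ parallel classes.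
   Context: A Steiner triple system $STS(v)$ is a pair $(\mathcal{P},\mathcal{B})$ with $|\mathcal{P}|=v$ and $\mathcal{B}$ a set of $3$-subsets (blocks) of $\mathcal{P}$ such that every $2$-subset of $\mathcal{P}$ lies in exactly one block. Its $3$-rank is the rank over $\mathbb{F}_3$ of its block–point incidence matrix. A parallel class is a subset of $\mathcal{B}$ whose blocks partition $\mathcal{P}$; $S$ is resolvable if $\mathcal{B}$ can be partitioned into parallel classes. A transversal design $TD[3;T]$ on three pairwise disjoint groups $H_1,H_2,H_3$ of size $T$ is a set of $T^2$ triples $\{a,b,c\}$ with $a\in H_1,b\in H_2,c\in H_3$ such that every pair of points from two distinct groups lies in exactly one triple; equivalently it is a Latin square of order $T$ (rows indexed by $H_1$, columns by $H_2$, symbols by $H_3$). Two Latin squares of order $n$ are orthogonal if superimposing them yields each ordered pair of symbols exactly once; an orthogonal mate of a Latin square is a Latin square orthogonal to it. Decomposition (from the cited structure theorem of Jungnickel et al. for non-full-3-rank STS, used here as the standing setup): if $S$ is an $STS(3^k)$ of $3$-rank at most $3^k-r$, then the point set $\mathcal{P}$ is partitioned into $M=3^{r-1}$ groups $G_x$ of size $T=3^{k-r+1}$, indexed by the points $x$ of the affine geometry $AG(r-1,3)$, and the block set splits as $\mathcal{B}=\bigcup_x \mathcal{B}_x\ \cup\ \bigcup_\ell \mathcal{B}_\ell$, where for each point $x$, $(G_x,\mathcal{B}_x)$ is an $STS(T)$, and for each line $\ell=\{x,y,z\}$ of $AG(r-1,3)$, $\mathcal{B}_\ell$ is a set of $T^2$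 blocks forming a transversal design $TD[3;T]$ on the three groups $G_x,G_y,G_z$. *)

theory Defs
  imports Main
begin

definition is_STS :: "'a set \<Rightarrow> 'a set set \<Rightarrow> bool" where
  "is_STS P Bs \<longleftrightarrow> finite P \<and> (\<forall>B\<in>Bs. B \<subseteq> P \<and> card B = 3) \<and>
     (\<forall>p\<in>P. \<forall>q\<in>P. p \<noteq> q \<longrightarrow> (\<exists>!B. B \<in> Bs \<and> p \<in> B \<and> q \<in> B))"

text \<open>Linear independence over F_3 of the rows (indexed by the blocks in A) of the
  block--point incidence matrix; F_3 is realised as the integers modulo 3.\<close>
definition f3_indep_rows :: "'a set \<Rightarrow> 'a set set \<Rightarrow> bool" where
  "f3_indep_rows P A \<longleftrightarrow>
     (\<forall>c :: 'a set \<Rightarrow> int.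
        (\<forall>p\<in>P. (\<Sum>B\<in>A. c B * (if p \<in> B then 1 else 0)) mod 3 = 0)
        \<longrightarrow> (\<forall>B\<in>A. c B mod 3 = 0))"

definition three_rank :: "'a set \<Rightarrow> 'a set set \<Rightarrow> nat" where
  "three_rank P Bs = Max {card A | A. A \<subseteq> Bs \<and> f3_indep_rows P A}"

definition parallel_class :: "'a set \<Rightarrow> 'a set set \<Rightarrow> 'a set set \<Rightarrow> bool" where
  "parallel_class P Bs \<pi> \<longleftrightarrow> \<pi> \<subseteq> Bs \<and> \<Union>\<pi> = P \<and>
     (\<forall>B\<in>\<pi>. \<forall>C\<in>\<pi>. B \<noteq> C \<longrightarrow> B \<inter> C = {})"

definition is_resolution :: "'a set \<Rightarrow> 'a set set \<Rightarrow> 'a set set set \<Rightarrow> bool" where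
  "is_resolution P Bs R \<longleftrightarrow> (\<forall>\<pi>\<in>R. parallel_class P Bs \<pi> \<and> \<pi> \<noteq> {}) \<and>
     \<Union>R = Bs \<and> (\<forall>\<pi>\<in>R. \<forall>\<sigma>\<in>R. \<pi> \<noteq> \<sigma> \<longrightarrow> \<pi> \<inter> \<sigma> = {})"

definition resolvable :: "'a set \<Rightarrow> 'a set set \<Rightarrow> bool" where
  "resolvable P Bs \<longleftrightarrow> (\<exists>R. is_resolution P Bs R)"

definition ag_points :: "nat \<Rightarrow> nat list set" where
  "ag_points n = {x. length x = n \<and> set x \<subseteq> {..<3}}"

definition ag_lines :: "nat \<Rightarrow> nat list set set" where
  "ag_lines n = {{map2 (\<lambda>ai di. (ai + t * di) mod 3) a d | t. t < 3} | a d.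
       a \<in> ag_points n \<and> d \<in> ag_points n \<and> d \<noteq> replicate n 0}"

definition is_TD :: "nat \<Rightarrow> 'a set \<Rightarrow> 'a set \<Rightarrow> 'a set \<Rightarrow> 'a set set \<Rightarrow> bool" where
  "is_TD T H1 H2 H3 Bs \<longleftrightarrow>
     finite H1 \<and> finite H2 \<and> finite H3 \<and>
     card H1 = T \<and> card H2 = T \<and> card H3 = T \<and>
     H1 \<inter> H2 = {} \<and> H1 \<inter> H3 = {} \<and> H2 \<inter> H3 = {} \<and>
     card Bs = T ^ 2 \<and>
     (\<forall>B\<in>Bs. \<exists>a\<in>H1. \<exists>b\<in>H2. \<exists>c\<in>H3. B = {a, b, c}) \<and>
     (\<forall>a\<in>H1. \<forall>b\<in>H2. \<exists>!B. B \<in> Bs \<and> a \<in> B \<and> b \<in> B) \<and>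
     (\<forall>a\<in>H1. \<forall>c\<in>H3. \<exists>!B. B \<in> Bs \<and> a \<in> B \<and> c \<in> B) \<and>
     (\<forall>b\<in>H2. \<forall>c\<in>H3. \<exists>!B. B \<in> Bs \<and> b \<in> B \<and> c \<in> B)"

text \<open>The Latin square of a TD: rows H1, columns H2, symbols H3.\<close>
definition TD_square :: "'a set \<Rightarrow> 'a set set \<Rightarrow> 'a \<Rightarrow> 'a \<Rightarrow> 'a" where
  "TD_square H3 Bs a b = (THE c. c \<in> H3 \<and> {a, b, c} \<in> Bs)"

definition latin_square :: "'r set \<Rightarrow> 'c set \<Rightarrow> 's set \<Rightarrow> ('r \<Rightarrow> 'c \<Rightarrow> 's) \<Rightarrow> bool" where
  "latin_square R C S L \<longleftrightarrow> finite R \<and> card R = card C \<and> card C = card S \<and>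
     (\<forall>a\<in>R. bij_betw (\<lambda>b. L a b) C S) \<and> (\<forall>b\<in>C. bij_betw (\<lambda>a. L a b) R S)"

definition orthogonal_squares ::
  "'r set \<Rightarrow> 'c set \<Rightarrow> ('r \<Rightarrow> 'c \<Rightarrow> 's) \<Rightarrow> ('r \<Rightarrow> 'c \<Rightarrow> 't) \<Rightarrow> bool" where
  "orthogonal_squares R C L1 L2 \<longleftrightarrow> inj_on (\<lambda>(a, b). (L1 a b, L2 a b)) (R \<times> C)"

text \<open>L (on R, C, S) has an orthogonal mate: a Latin square on the same rows and
  columns (symbols taken, w.l.o.g., from a set of the same size, here S itself)
  orthogonal to it.\<close>
definition has_orthogonal_mate :: "'r set \<Rightarrow> 'c set \<Rightarrow> 's set \<Rightarrow> ('r \<Rightarrow> 'c \<Rightarrow> 's) \<Rightarrow> bool" where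
  "has_orthogonal_mate R C S L \<longleftrightarrow>
     (\<exists>L'. latin_square R C S L' \<and> orthogonal_squares R C L L')"

definition STS_decomposition ::
  "'a set \<Rightarrow> 'a set set \<Rightarrow> nat \<Rightarrow> nat \<Rightarrow> (nat list \<Rightarrow> 'a set) \<Rightarrow>
   (nat list \<Rightarrow> 'a set set) \<Rightarrow> (nat list set \<Rightarrow> 'a set set) \<Rightarrow> bool" where
  "STS_decomposition P Bs r T G Bx Bl \<longleftrightarrow>
     (\<forall>x\<in>ag_points (r - 1). G x \<subseteq> P \<and> card (G x) = T) \<and>
     (\<forall>x\<in>ag_points (r - 1). \<forall>y\<in>ag_points (r - 1). x \<noteq> y \<longrightarrow> G x \<inter> G y = {}) \<and>
     (\<Union>x\<in>ag_points (r - 1). G x) = P \<and>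
     (\<forall>x\<in>ag_points (r - 1). is_STS (G x) (Bx x)) \<and>
     (\<forall>l\<in>ag_lines (r - 1). \<exists>x y z. l = {x, y, z} \<and> x \<noteq> y \<and> x \<noteq> z \<and> y \<noteq> z \<and>
         is_TD T (G x) (G y) (G z) (Bl l)) \<and>
     Bs = (\<Union>x\<in>ag_points (r - 1). Bx x) \<union> (\<Union>l\<in>ag_lines (r - 1). Bl l)"

end

theory Submission imports Defs begin

definition vadd :: "nat list \<Rightarrow> nat list \<Rightarrow> nat \<Rightarrow> nat list" where
  "vadd a d t = map2 (\<lambda>ai di. (ai + t * di) mod 3) a d"
definition line :: "nat list \<Rightarrow> nat list \<Rightarrow> nat list set" where
  "line a d = {vadd a d t | t. t < 3}"
definition tr :: "nat list \<Rightarrow> nat list \<Rightarrow> nat list" where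
  "tr v p = map2 (\<lambda>a b. (a + b) mod 3) v p"
definition sub :: "nat list \<Rightarrow> nat list \<Rightarrow> nat list" where
  "sub b a = map2 (\<lambda>x y. (x + 3 - y) mod 3) b a"
definition Par :: "nat \<Rightarrow> nat list set \<Rightarrow> nat list set set" where
  "Par n l = {l' \<in> ag_lines n. \<exists>v\<in>ag_points n. l' = tr v ` l}"

lemma modlem: "((x + t*y) mod 3 + s*y) mod 3 = (x + ((t+s) mod 3)*y) mod (3::nat)"
proof -
  have "((x + t*y) mod 3 + s*y) mod 3 = (x + t*y + s*y) mod 3" by (simp add: mod_add_left_eq)
  also have "\<dots> = (x + (t+s)*y) mod 3" by (simp add: algebra_simps)
  also have "\<dots> = (x + ((t+s)*y) mod 3) mod 3" by (simp add: mod_add_right_eq)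
  also have "((t+s)*y) mod 3 = (((t+s) mod 3)*y) mod 3" by (simp add: mod_mult_left_eq)
  also have "(x + (((t+s) mod 3)*y) mod 3) mod 3 = (x + ((t+s) mod 3)*y) mod 3" by (simp add: mod_add_right_eq)
  finally show ?thesis .
qed
lemma modlem2: "x < 3 \<Longrightarrow> (x + 0 * y) mod 3 = (x::nat)" by simp
lemma modlem3: "s < 3 \<Longrightarrow> t < 3 \<Longrightarrow> (t + (s + 2 * t) mod 3) mod 3 = (s::nat)"
  by (simp add: mod_add_right_eq)
lemma modlem4: "(v + (a + t * d) mod 3) mod 3 = ((v + a) mod 3 + t * d) mod (3::nat)"
  by (simp add: mod_add_left_eq mod_add_right_eq add.assoc)
lemma modlem5: "a < 3 \<Longrightarrow> b < 3 \<Longrightarrow> ((b + 3 - a) mod 3 + a) mod 3 = (b::nat)"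
  by (simp add: mod_add_left_eq) 

lemma pts_nth: "x \<in> ag_points n \<Longrightarrow> i < n \<Longrightarrow> x ! i < 3"
  unfolding ag_points_def by (auto simp: subset_iff)

lemma pts_len: "x \<in> ag_points n \<Longrightarrow> length x = n"
  unfolding ag_points_def by auto

lemma pts_I: "length x = n \<Longrightarrow> (\<And>i. i < n \<Longrightarrow> x ! i < 3) \<Longrightarrow> x \<in> ag_points n"
  unfolding ag_points_def by (auto simp: in_set_conv_nth)

lemma ag_lines_eq: "ag_lines n = {line a d | a d. a \<in> ag_points n \<and> d \<in> ag_points n \<and> d \<noteq> replicate n 0}"
  unfolding ag_lines_def line_def vadd_def by simp

lemma vadd_pts: "a \<in> ag_points n \<Longrightarrow> d \<in> ag_points n \<Longrightarrow> vadd a d t \<in> ag_points n"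
  by (rule pts_I) (auto simp: vadd_def pts_len)

lemma line_pts: "a \<in> ag_points n \<Longrightarrow> d \<in> ag_points n \<Longrightarrow> line a d \<subseteq> ag_points n"
  unfolding line_def using vadd_pts by blast

lemma vadd_vadd: "a \<in> ag_points n \<Longrightarrow> d \<in> ag_points n \<Longrightarrow>
   vadd (vadd a d t) d s = vadd a d ((t + s) mod 3)"
  apply (rule nth_equalityI)
   apply (simp add: vadd_def pts_len)
  by (simp add: vadd_def pts_len modlem)

lemma vadd0: "a \<in> ag_points n \<Longrightarrow> d \<in> ag_points n \<Longrightarrow> vadd a d 0 = a"
  apply (rule nth_equalityI)
   apply (simp add: vadd_def pts_len)
  by (simp add: vadd_def pts_len pts_nth)

lemma line_eq: assumes "a \<in> ag_points n" "d \<in> ag_points n" "p \<in> line a d"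
  shows "line p d = line a d"
proof -
  obtain t where t: "t < 3" "p = vadd a d t" using assms(3) unfolding line_def by auto
  show ?thesis
  proof
    show "line p d \<subseteq> line a d"
      using assms t by (auto simp: line_def vadd_vadd)
  next
    show "line a d \<subseteq> line p d"
    proof
      fix q assume "q \<in> line a d"
      then obtain s where s: "s < 3" "q = vadd a d s" unfolding line_def by auto
      have "vadd p d ((s + 2 * t) mod 3) = vadd a d ((t + (s + 2*t) mod 3) mod 3)"
        using t assms by (simp add: vadd_vadd)
      also have "(t + (s + 2*t) mod 3) mod 3 = s" using s t modlem3 by blast
      finally have "q = vadd p d ((s + 2 * t) mod 3)" using s by simp
      moreover have "(s + 2 * t) mod 3 < 3" by simp
      ultimately show "q \<in> line p d" unfolding line_def by blast
    qed
  qed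
qed

lemma tr_vadd: "a \<in> ag_points n \<Longrightarrow> d \<in> ag_points n \<Longrightarrow> v \<in> ag_points n \<Longrightarrow>
   tr v (vadd a d t) = vadd (tr v a) d t"
  apply (rule nth_equalityI)
   apply (simp add: vadd_def tr_def pts_len)
  by (simp add: vadd_def tr_def pts_len modlem4)

lemma tr_pts: "a \<in> ag_points n \<Longrightarrow> v \<in> ag_points n \<Longrightarrow> tr v a \<in> ag_points n"
  by (rule pts_I) (auto simp: tr_def pts_len)

lemma sub_pts: "a \<in> ag_points n \<Longrightarrow> b \<in> ag_points n \<Longrightarrow> sub b a \<in> ag_points n"
  by (rule pts_I) (auto simp: sub_def pts_len)

lemma tr_sub: "a \<in> ag_points n \<Longrightarrow> b \<in> ag_points n \<Longrightarrow> tr (sub b a) a = b"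
  apply (rule nth_equalityI)
   apply (simp add: sub_def tr_def pts_len)
  apply (simp add: sub_def tr_def pts_len)
  subgoal for i
    using pts_nth[of a n i] pts_nth[of b n i] modlem5 by (simp add: add.commute)
  done

lemma tr_line: "a \<in> ag_points n \<Longrightarrow> d \<in> ag_points n \<Longrightarrow> v \<in> ag_points n \<Longrightarrow>
   tr v ` line a d = line (tr v a) d"
  unfolding line_def using tr_vadd by (auto simp: image_iff) (metis tr_vadd)+

lemma Par_char: assumes "a \<in> ag_points n" "d \<in> ag_points n" "d \<noteq> replicate n 0"
  shows "Par n (line a d) = {line b d | b. b \<in> ag_points n}"
proof
  show "Par n (line a d) \<subseteq> {line b d | b. b \<in> ag_points n}"
    using assms by (auto simp: Par_def tr_line tr_pts)
next
  show "{line b d | b. b \<in> ag_points n} \<subseteq> Par n (line a d)"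
  proof clarify
    fix b assume b: "b \<in> ag_points n"
    have "line b d = tr (sub b a) ` line a d" using assms b by (simp add: tr_line sub_pts tr_sub)
    moreover have "line b d \<in> ag_lines n" using assms b by (auto simp: ag_lines_eq)
    ultimately show "line b d \<in> Par n (line a d)" using b assms sub_pts unfolding Par_def by blast
  qed
qed

lemma lines_sub: "l \<in> ag_lines n \<Longrightarrow> l \<subseteq> ag_points n"
  by (auto simp: ag_lines_eq dest: line_pts)

lemma Par_self: "l \<in> ag_lines n \<Longrightarrow> l \<in> Par n l"
  by (auto simp: ag_lines_eq Par_char)

lemma Par_sub: "Par n l \<subseteq> ag_lines n"
  by (auto simp: Par_def)

lemma Par_eq: assumes "l \<in> ag_lines n" "l' \<in> Par n l" shows "Par n l' = Par n l"
proof -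
  obtain a d where ad: "l = line a d" "a \<in> ag_points n" "d \<in> ag_points n" "d \<noteq> replicate n 0"
    using assms(1) by (auto simp: ag_lines_eq)
  then obtain b where b: "l' = line b d" "b \<in> ag_points n" using assms(2) Par_char by blast
  show ?thesis using ad b Par_char by simp
qed

lemma self_in_line: assumes "a \<in> ag_points n" "d \<in> ag_points n" shows "a \<in> line a d"
proof -
  have "vadd a d 0 = a" using vadd0 assms by blast
  then show ?thesis unfolding line_def by (intro CollectI exI[of _ 0]) simp
qed

lemma Par_cover: assumes "l \<in> ag_lines n" "p \<in> ag_points n" shows "\<exists>l'\<in>Par n l. p \<in> l'"
proof -
  obtain a d where ad: "l = line a d" "a \<in> ag_points n" "d \<in> ag_points n" "d \<noteq> replicate n 0"
    using assms(1) by (auto simp: ag_lines_eq)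
  have "line p d \<in> Par n l" using ad Par_char assms(2) by blast
  moreover have "p \<in> line p d" using self_in_line assms(2) ad by blast
  ultimately show ?thesis by blast
qed

lemma Par_disj: assumes "l \<in> ag_lines n" "l1 \<in> Par n l" "l2 \<in> Par n l" "p \<in> l1" "p \<in> l2"
  shows "l1 = l2"
proof -
  obtain a d where ad: "l = line a d" "a \<in> ag_points n" "d \<in> ag_points n" "d \<noteq> replicate n 0"
    using assms(1) by (auto simp: ag_lines_eq)
  obtain b1 where b1: "l1 = line b1 d" "b1 \<in> ag_points n" using assms(2) ad Par_char by blast
  obtain b2 where b2: "l2 = line b2 d" "b2 \<in> ag_points n" using assms(3) ad Par_char by blast
  have "line p d = line b1 d" using line_eq b1 ad assms(4) by blast
  moreover have "line p d = line b2 d" using line_eq b2 ad assms(5) by blast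
  ultimately show ?thesis using b1 b2 by simp
qed


lemma resolution_card:
  assumes sts: "is_STS P Bs" and res: "is_resolution P Bs R" and p: "p \<in> P"
  shows "2 * card R = card P - 1"
proof -
  define D where "D = {B\<in>Bs. p \<in> B}"
  have fin: "finite P" using sts by (simp add: is_STS_def)
  have Bsub: "\<And>B. B \<in> Bs \<Longrightarrow> B \<subseteq> P \<and> card B = 3" using sts by (simp add: is_STS_def)
  have uniq: "\<And>q. q \<in> P \<Longrightarrow> q \<noteq> p \<Longrightarrow> \<exists>!B. B \<in> Bs \<and> p \<in> B \<and> q \<in> B"
    using sts p by (simp add: is_STS_def)
  have finD: "finite D" unfolding D_def
  proof (rule finite_subset[of _ "Pow P"])
    show "{B \<in> Bs. p \<in> B} \<subseteq> Pow P" using Bsub by auto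
  qed (use fin in auto)
  have eq: "P - {p} = (\<Union>B\<in>D. B - {p})"
  proof
    show "P - {p} \<subseteq> (\<Union>B\<in>D. B - {p})"
    proof
      fix q assume "q \<in> P - {p}"
      then obtain B where "B \<in> Bs" "p \<in> B" "q \<in> B" using uniq by blast
      then show "q \<in> (\<Union>B\<in>D. B - {p})" using \<open>q \<in> P - {p}\<close> by (auto simp: D_def)
    qed
  qed (use Bsub in \<open>auto simp: D_def\<close>)
  have "card (P - {p}) = (\<Sum>B\<in>D. card (B - {p}))"
    unfolding eq
  proof (rule card_UN_disjoint[OF finD])
    show "\<forall>i\<in>D. finite (i - {p})" using Bsub fin finite_subset unfolding D_def by blast
    show "\<forall>i\<in>D. \<forall>j\<in>D. i \<noteq> j \<longrightarrow> (i - {p}) \<inter> (j - {p}) = {}"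
    proof (intro ballI impI)
      fix i j assume "i \<in> D" "j \<in> D" "i \<noteq> j"
      show "(i - {p}) \<inter> (j - {p}) = {}"
      proof (rule ccontr)
        assume "(i - {p}) \<inter> (j - {p}) \<noteq> {}"
        then obtain q where q: "q \<in> i" "q \<in> j" "q \<noteq> p" by auto
        have "q \<in> P" using q \<open>i \<in> D\<close> Bsub unfolding D_def by blast
        have "i \<in> Bs \<and> p \<in> i \<and> q \<in> i" "j \<in> Bs \<and> p \<in> j \<and> q \<in> j"
          using q \<open>i \<in> D\<close> \<open>j \<in> D\<close> unfolding D_def by auto
        then show False using uniq[OF \<open>q \<in> P\<close> \<open>q \<noteq> p\<close>] \<open>i \<noteq> j\<close> by blast
      qed
    qed
  qed
  also have "\<dots> = (\<Sum>B\<in>D. 2)"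
  proof (rule sum.cong)
    fix B assume "B \<in> D"
    then have "card B = 3" "p \<in> B" "finite B" using Bsub fin finite_subset unfolding D_def by blast+
    then show "card (B - {p}) = 2" by simp
  qed simp
  finally have c1: "card P - 1 = 2 * card D" using p fin by simp
  define g where "g \<pi> = (THE B. B \<in> \<pi> \<and> p \<in> B)" for \<pi>
  have pc: "\<And>\<pi>. \<pi> \<in> R \<Longrightarrow> parallel_class P Bs \<pi>" using res by (simp add: is_resolution_def)
  have gprop: "\<And>\<pi>. \<pi> \<in> R \<Longrightarrow> g \<pi> \<in> \<pi> \<and> p \<in> g \<pi>"
  proof -
    fix \<pi> assume "\<pi> \<in> R"
    then have pcl: "parallel_class P Bs \<pi>" by (rule pc)
    then obtain B where B: "B \<in> \<pi>" "p \<in> B" using p unfolding parallel_class_def by blast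
    have "\<exists>!B. B \<in> \<pi> \<and> p \<in> B"
      using B pcl unfolding parallel_class_def by blast
    then show "g \<pi> \<in> \<pi> \<and> p \<in> g \<pi>" unfolding g_def by (rule theI')
  qed
  have gu: "\<And>\<pi> B. \<pi> \<in> R \<Longrightarrow> B \<in> \<pi> \<Longrightarrow> p \<in> B \<Longrightarrow> g \<pi> = B"
  proof -
    fix \<pi> B assume "\<pi> \<in> R" "B \<in> \<pi>" "p \<in> B"
    then show "g \<pi> = B" using gprop[OF \<open>\<pi> \<in> R\<close>] pc[OF \<open>\<pi> \<in> R\<close>]
      unfolding parallel_class_def by blast
  qed
  have "bij_betw g R D"
  proof (rule bij_betw_imageI)
    show "inj_on g R"
    proof (rule inj_onI)
      fix \<pi> \<sigma> assume "\<pi> \<in> R" "\<sigma> \<in> R" "g \<pi> = g \<sigma>"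
      then have "g \<pi> \<in> \<pi> \<inter> \<sigma>" using gprop[of \<pi>] gprop[of \<sigma>] by simp
      then show "\<pi> = \<sigma>" using res \<open>\<pi> \<in> R\<close> \<open>\<sigma> \<in> R\<close> unfolding is_resolution_def by blast
    qed
    show "g ` R = D"
    proof
      show "g ` R \<subseteq> D"
      proof
        fix B assume "B \<in> g ` R"
        then obtain \<pi> where pi: "\<pi> \<in> R" "B = g \<pi>" by blast
        then have "B \<in> \<pi>" "p \<in> B" using gprop by blast+
        moreover have "\<pi> \<subseteq> Bs" using pc[OF pi(1)] unfolding parallel_class_def by blast
        ultimately show "B \<in> D" unfolding D_def by blast
      qed
      show "D \<subseteq> g ` R"
      proof
        fix B assume "B \<in> D"
        then have "B \<in> \<Union>R" using res unfolding D_def is_resolution_def by blast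
        then obtain \<pi> where "\<pi> \<in> R" "B \<in> \<pi>" by auto
        then show "B \<in> g ` R" using gu[of \<pi> B] \<open>B \<in> D\<close> unfolding D_def by blast
      qed
    qed
  qed
  then have "card R = card D" by (rule bij_betw_same_card)
  then show ?thesis using c1 by simp
qed


lemma TD_D: assumes "is_TD T H1 H2 H3 Bs"
  shows "H1 \<inter> H2 = {}" "H1 \<inter> H3 = {}" "H2 \<inter> H3 = {}"
    "finite H1" "finite H2" "finite H3" "card H1 = T" "card H2 = T" "card H3 = T"
    "\<forall>B\<in>Bs. \<exists>a\<in>H1. \<exists>b\<in>H2. \<exists>c\<in>H3. B = {a, b, c}"
    "\<forall>a\<in>H1. \<forall>b\<in>H2. \<exists>!B. B \<in> Bs \<and> a \<in> B \<and> b \<in> B"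
  using assms unfolding is_TD_def by simp_all

lemma TD_sq:
  assumes td: "is_TD T H1 H2 H3 Bs" and a: "a \<in> H1" and b: "b \<in> H2"
  shows "TD_square H3 Bs a b \<in> H3 \<and> {a, b, TD_square H3 Bs a b} \<in> Bs"
    and "\<And>c. c \<in> H3 \<Longrightarrow> {a,b,c} \<in> Bs \<Longrightarrow> TD_square H3 Bs a b = c"
proof -
  note D = TD_D[OF td]
  have u: "\<exists>!B. B \<in> Bs \<and> a \<in> B \<and> b \<in> B" using D(11) a b by blast
  then obtain B where B: "B \<in> Bs" "a \<in> B" "b \<in> B" by blast
  have uu: "\<And>X Y. X \<in> Bs \<Longrightarrow> a \<in> X \<Longrightarrow> b \<in> X \<Longrightarrow> Y \<in> Bs \<Longrightarrow> a \<in> Y \<Longrightarrow> b \<in> Y \<Longrightarrow> X = Y"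
    using u by blast
  have "\<exists>a\<in>H1. \<exists>b\<in>H2. \<exists>c\<in>H3. B = {a, b, c}" by (rule bspec[OF D(10) B(1)])
  then obtain a' b' c' where abc: "a' \<in> H1" "b' \<in> H2" "c' \<in> H3" "B = {a',b',c'}" by metis
  have "a \<noteq> b'" "a \<noteq> c'" using a abc D(1,2) by blast+
  then have "a = a'" using B(2) abc(4) by blast
  have "b \<noteq> a'" "b \<noteq> c'" using b abc D(1,3) by blast+
  then have "b = b'" using B(3) abc(4) by blast
  have ex: "c' \<in> H3" "{a,b,c'} \<in> Bs" using abc B \<open>a = a'\<close> \<open>b = b'\<close> by simp_all
  have un: "\<And>c. c \<in> H3 \<Longrightarrow> {a,b,c} \<in> Bs \<Longrightarrow> c = c'"
  proof -
    fix c assume c: "c \<in> H3" "{a,b,c} \<in> Bs"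
    have "{a,b,c} = {a,b,c'}" using uu[OF c(2) _ _ ex(2)] by simp
    then have "c \<in> {a,b,c'}" by blast
    moreover have "c \<noteq> a" "c \<noteq> b" using c a b D(2,3) by blast+
    ultimately show "c = c'" by blast
  qed
  have "TD_square H3 Bs a b = c'"
    unfolding TD_square_def
  proof (rule the_equality)
    show "c' \<in> H3 \<and> {a, b, c'} \<in> Bs" using ex by blast
    show "\<And>c. c \<in> H3 \<and> {a, b, c} \<in> Bs \<Longrightarrow> c = c'" using un by blast
  qed
  then show "TD_square H3 Bs a b \<in> H3 \<and> {a, b, TD_square H3 Bs a b} \<in> Bs" using ex by simp
  show "\<And>c. c \<in> H3 \<Longrightarrow> {a,b,c} \<in> Bs \<Longrightarrow> TD_square H3 Bs a b = c"
    using un \<open>TD_square H3 Bs a b = c'\<close> by simp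
qed

lemma TD_trans:
  assumes td: "is_TD T H1 H2 H3 Bs" and ls: "latin_square H1 H2 H3 L'"
    and orth: "orthogonal_squares H1 H2 (TD_square H3 Bs) L'"
    and s: "s \<in> H3"
  defines "Tr \<equiv> {{a, b, TD_square H3 Bs a b} | a b. a \<in> H1 \<and> b \<in> H2 \<and> L' a b = s}"
  shows "Tr \<subseteq> Bs" "\<Union>Tr = H1 \<union> H2 \<union> H3" "\<And>B C. B \<in> Tr \<Longrightarrow> C \<in> Tr \<Longrightarrow> B \<noteq> C \<Longrightarrow> B \<inter> C = {}"
proof -
  let ?L = "TD_square H3 Bs"
  have d: "H1 \<inter> H2 = {}" "H1 \<inter> H3 = {}" "H2 \<inter> H3 = {}" using TD_D[OF td] by simp_all
  have fin: "finite H1" "finite H2" "finite H3" "card H1 = T" "card H2 = T" "card H3 = T"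
    using TD_D[OF td] by simp_all
  have row: "\<And>a. a \<in> H1 \<Longrightarrow> bij_betw (\<lambda>b. L' a b) H2 H3" using ls by (simp add: latin_square_def)
  have col: "\<And>b. b \<in> H2 \<Longrightarrow> bij_betw (\<lambda>a. L' a b) H1 H3" using ls by (simp add: latin_square_def)
  have inj: "inj_on (\<lambda>(a, b). (?L a b, L' a b)) (H1 \<times> H2)" using orth by (simp add: orthogonal_squares_def)
  have Lin: "\<And>a b. a \<in> H1 \<Longrightarrow> b \<in> H2 \<Longrightarrow> ?L a b \<in> H3" using TD_sq(1)[OF td] by blast
  have L'in: "\<And>a b. a \<in> H1 \<Longrightarrow> b \<in> H2 \<Longrightarrow> L' a b \<in> H3" using row bij_betwE by blast
  show "Tr \<subseteq> Bs" unfolding Tr_def using TD_sq(1)[OF td] by blast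
  have surj: "(\<lambda>(a, b). (?L a b, L' a b)) ` (H1 \<times> H2) = H3 \<times> H3"
  proof (rule card_subset_eq)
    show "finite (H3 \<times> H3)" using fin by simp
    show "(\<lambda>(a, b). (?L a b, L' a b)) ` (H1 \<times> H2) \<subseteq> H3 \<times> H3" using Lin L'in by auto
    show "card ((\<lambda>(a, b). (?L a b, L' a b)) ` (H1 \<times> H2)) = card (H3 \<times> H3)"
      using card_image[OF inj] fin by (simp add: card_cartesian_product)
  qed
  show "\<Union>Tr = H1 \<union> H2 \<union> H3"
  proof
    show "\<Union>Tr \<subseteq> H1 \<union> H2 \<union> H3" unfolding Tr_def using Lin by auto
    show "H1 \<union> H2 \<union> H3 \<subseteq> \<Union>Tr"
    proof
      fix x assume "x \<in> H1 \<union> H2 \<union> H3"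
      then consider "x \<in> H1" | "x \<in> H2" | "x \<in> H3" by blast
      then show "x \<in> \<Union>Tr"
      proof cases
        case 1
        then obtain b where "b \<in> H2" "L' x b = s" using row[OF 1] s by (metis bij_betw_iff_bijections)
        then show ?thesis using 1 unfolding Tr_def by blast
      next
        case 2
        then obtain a where "a \<in> H1" "L' a x = s" using col[OF 2] s by (metis bij_betw_iff_bijections)
        then show ?thesis using 2 unfolding Tr_def by blast
      next
        case 3
        then have "(x, s) \<in> (\<lambda>(a, b). (?L a b, L' a b)) ` (H1 \<times> H2)" using surj s by auto
        then obtain a b where "a \<in> H1" "b \<in> H2" "?L a b = x" "L' a b = s" by auto
        then show ?thesis unfolding Tr_def by blast
      qed
    qed
  qed
  show "\<And>B C. B \<in> Tr \<Longrightarrow> C \<in> Tr \<Longrightarrow> B \<noteq> C \<Longrightarrow> B \<inter> C = {}"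
  proof -
    fix B C assume B: "B \<in> Tr" and C: "C \<in> Tr" and ne: "B \<noteq> C"
    obtain a b where ab: "a \<in> H1" "b \<in> H2" "L' a b = s" "B = {a, b, ?L a b}" using B unfolding Tr_def by blast
    obtain a' b' where ab': "a' \<in> H1" "b' \<in> H2" "L' a' b' = s" "C = {a', b', ?L a' b'}" using C unfolding Tr_def by blast
    have "a \<noteq> a'"
    proof
      assume "a = a'"
      then have "b = b'" using row[OF ab(1)] ab ab' by (metis bij_betw_iff_bijections)
      then show False using ne ab ab' \<open>a = a'\<close> by simp
    qed
    moreover have "b \<noteq> b'"
    proof
      assume "b = b'"
      then have "a = a'" using col[OF ab(2)] ab ab' by (metis bij_betw_iff_bijections)
      then show False using ne ab ab' \<open>b = b'\<close> by simp
    qed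
    moreover have "?L a b \<noteq> ?L a' b'"
    proof
      assume "?L a b = ?L a' b'"
      then have "(a, b) = (a', b')" using inj ab ab' unfolding inj_on_def by auto
      then show False using ne ab ab' by simp
    qed
    ultimately show "B \<inter> C = {}" using ab ab' d Lin[OF ab(1,2)] Lin[OF ab'(1,2)] by blast
  qed
qed

lemma TD_cover:
  assumes td: "is_TD T H1 H2 H3 Bs" and B: "B \<in> Bs"
  shows "\<exists>a\<in>H1. \<exists>b\<in>H2. B = {a, b, TD_square H3 Bs a b}"
proof -
  have "\<exists>a\<in>H1. \<exists>b\<in>H2. \<exists>c\<in>H3. B = {a, b, c}" by (rule bspec[OF TD_D(10)[OF td] B])
  then obtain a b c where abc: "a \<in> H1" "b \<in> H2" "c \<in> H3" "B = {a,b,c}" by metis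
  then have "TD_square H3 Bs a b = c" using TD_sq(2)[OF td] B by blast
  then show ?thesis using abc by metis
qed

lemma TD_blk:
  assumes td: "is_TD T H1 H2 H3 Bs" and B: "B \<in> Bs"
  shows "\<exists>a\<in>H1. \<exists>b\<in>H2. \<exists>c\<in>H3. B = {a, b, c}"
  by (rule bspec[OF TD_D(10)[OF td] B])

lemma DEC_D: assumes "STS_decomposition P Bs r T G Bx Bl"
  shows "\<forall>x\<in>ag_points (r - 1). G x \<subseteq> P \<and> card (G x) = T"
    "\<forall>x\<in>ag_points (r - 1). \<forall>y\<in>ag_points (r - 1). x \<noteq> y \<longrightarrow> G x \<inter> G y = {}"
    "(\<Union>x\<in>ag_points (r - 1). G x) = P"
    "\<forall>x\<in>ag_points (r - 1). is_STS (G x) (Bx x)"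
    "Bs = (\<Union>x\<in>ag_points (r - 1). Bx x) \<union> (\<Union>l\<in>ag_lines (r - 1). Bl l)"
proof -
  note A = assms[unfolded STS_decomposition_def]
  show "\<forall>x\<in>ag_points (r - 1). G x \<subseteq> P \<and> card (G x) = T" by (rule A[THEN conjunct1])
  show "\<forall>x\<in>ag_points (r - 1). \<forall>y\<in>ag_points (r - 1). x \<noteq> y \<longrightarrow> G x \<inter> G y = {}" by (rule A[THEN conjunct2, THEN conjunct1])
  show "(\<Union>x\<in>ag_points (r - 1). G x) = P" by (rule A[THEN conjunct2, THEN conjunct2, THEN conjunct1])
  show "\<forall>x\<in>ag_points (r - 1). is_STS (G x) (Bx x)" by (rule A[THEN conjunct2, THEN conjunct2, THEN conjunct2, THEN conjunct1])
  show "Bs = (\<Union>x\<in>ag_points (r - 1). Bx x) \<union> (\<Union>l\<in>ag_lines (r - 1). Bl l)" by (rule A[THEN conjunct2, THEN conjunct2, THEN conjunct2, THEN conjunct2, THEN conjunct2])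
qed
theorem theorem3p7:
  fixes k r :: nat and P :: "'a set" and Bs :: "'a set set"
    and G :: "nat list \<Rightarrow> 'a set" and Bx :: "nat list \<Rightarrow> 'a set set"
    and Bl :: "nat list set \<Rightarrow> 'a set set"
  assumes "k \<ge> 2" and "2 \<le> r" and "r \<le> k"
    and "is_STS P Bs" and "card P = 3 ^ k"
    and "three_rank P Bs \<le> 3 ^ k - r"
    and "STS_decomposition P Bs r (3 ^ (k - r + 1)) G Bx Bl"
    and "\<forall>x\<in>ag_points (r - 1). resolvable (G x) (Bx x)"
    and "\<forall>l\<in>ag_lines (r - 1). \<exists>x y z. l = {x, y, z} \<and> x \<noteq> y \<and> x \<noteq> z \<and> y \<noteq> z \<and>
           is_TD (3 ^ (k - r + 1)) (G x) (G y) (G z) (Bl l) \<and>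
           has_orthogonal_mate (G x) (G y) (G z) (TD_square (G z) (Bl l))"
  shows "resolvable P Bs \<and>
         (\<exists>R. is_resolution P Bs R \<and> card R = (3 ^ k - 1) div 2)"
proof -
  define n where "n = r - 1"
  define T :: nat where "T = 3 ^ (k - r + 1)"
  define pts where "pts = ag_points n"
  define lines where "lines = ag_lines n"
  have T3: "T \<ge> 3"
  proof -
    have "(3::nat)^1 \<le> 3^(k-r+1)" by (rule power_increasing) simp_all
    then show ?thesis unfolding T_def by simp
  qed
  have dec: "STS_decomposition P Bs r T G Bx Bl" using assms(7) T_def by simp
  note DD = DEC_D[OF dec]
  have Gsub: "\<And>x. x \<in> pts \<Longrightarrow> G x \<subseteq> P \<and> card (G x) = T"
    using DD(1) unfolding pts_def n_def by blast
  have Gdisj: "\<And>x y. x \<in> pts \<Longrightarrow> y \<in> pts \<Longrightarrow> x \<noteq> y \<Longrightarrow> G x \<inter> G y = {}"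
    using DD(2) unfolding pts_def n_def by blast
  have Gun: "(\<Union>x\<in>pts. G x) = P"
    using DD(3) unfolding pts_def n_def by simp
  have Gsts: "\<And>x. x \<in> pts \<Longrightarrow> is_STS (G x) (Bx x)"
    using DD(4) unfolding pts_def n_def by blast
  have Bseq: "Bs = (\<Union>x\<in>pts. Bx x) \<union> (\<Union>l\<in>lines. Bl l)"
    using DD(5) unfolding pts_def n_def lines_def by simp
  have finP: "finite P" using assms(4) by (simp add: is_STS_def)
  have finG: "\<And>x. x \<in> pts \<Longrightarrow> finite (G x)" using Gsub finP finite_subset by blast
  have Gne: "\<And>x. x \<in> pts \<Longrightarrow> G x \<noteq> {}" using Gsub finG T3 by fastforce
  have ptsne: "replicate n 0 \<in> pts" unfolding pts_def by (rule pts_I) simp_all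
  have "\<forall>l\<in>lines. \<exists>X Y Z L. l = {X, Y, Z} \<and> X \<noteq> Y \<and> X \<noteq> Z \<and> Y \<noteq> Z \<and>
           is_TD T (G X) (G Y) (G Z) (Bl l) \<and> latin_square (G X) (G Y) (G Z) L \<and>
           orthogonal_squares (G X) (G Y) (TD_square (G Z) (Bl l)) L"
  proof
    fix l assume "l \<in> lines"
    then have l: "l \<in> ag_lines (r - 1)" unfolding lines_def n_def .
    obtain x y z where xyz: "l = {x, y, z}" "x \<noteq> y" "x \<noteq> z" "y \<noteq> z"
        "is_TD T (G x) (G y) (G z) (Bl l)" "has_orthogonal_mate (G x) (G y) (G z) (TD_square (G z) (Bl l))"
      using bspec[OF assms(9) l] unfolding T_def by (elim exE conjE) 
    obtain L where L: "latin_square (G x) (G y) (G z) L" "orthogonal_squares (G x) (G y) (TD_square (G z) (Bl l)) L"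
      using xyz(6) unfolding has_orthogonal_mate_def by (elim exE conjE)
    show "\<exists>X Y Z L. l = {X, Y, Z} \<and> X \<noteq> Y \<and> X \<noteq> Z \<and> Y \<noteq> Z \<and>
           is_TD T (G X) (G Y) (G Z) (Bl l) \<and> latin_square (G X) (G Y) (G Z) L \<and>
           orthogonal_squares (G X) (G Y) (TD_square (G Z) (Bl l)) L"
      by (intro exI conjI, rule xyz(1), rule xyz(2), rule xyz(3), rule xyz(4), rule xyz(5), rule L(1), rule L(2))
  qed
  then obtain X Y Z Lm where XYZ: "\<And>l. l \<in> lines \<Longrightarrow> l = {X l, Y l, Z l} \<and> X l \<noteq> Y l \<and> X l \<noteq> Z l \<and> Y l \<noteq> Z l \<and>
           is_TD T (G (X l)) (G (Y l)) (G (Z l)) (Bl l) \<and> latin_square (G (X l)) (G (Y l)) (G (Z l)) (Lm l) \<and>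
           orthogonal_squares (G (X l)) (G (Y l)) (TD_square (G (Z l)) (Bl l)) (Lm l)"
    by metis
  have lX: "\<And>l. l \<in> lines \<Longrightarrow> l = {X l, Y l, Z l}" by (rule XYZ[THEN conjunct1])
  have ld1: "\<And>l. l \<in> lines \<Longrightarrow> X l \<noteq> Y l" by (rule XYZ[THEN conjunct2, THEN conjunct1])
  have ld2: "\<And>l. l \<in> lines \<Longrightarrow> X l \<noteq> Z l" by (rule XYZ[THEN conjunct2, THEN conjunct2, THEN conjunct1])
  have ld3: "\<And>l. l \<in> lines \<Longrightarrow> Y l \<noteq> Z l" by (rule XYZ[THEN conjunct2, THEN conjunct2, THEN conjunct2, THEN conjunct1])
  have ltd: "\<And>l. l \<in> lines \<Longrightarrow> is_TD T (G (X l)) (G (Y l)) (G (Z l)) (Bl l)"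
    by (rule XYZ[THEN conjunct2, THEN conjunct2, THEN conjunct2, THEN conjunct2, THEN conjunct1])
  have lls: "\<And>l. l \<in> lines \<Longrightarrow> latin_square (G (X l)) (G (Y l)) (G (Z l)) (Lm l)"
    by (rule XYZ[THEN conjunct2, THEN conjunct2, THEN conjunct2, THEN conjunct2, THEN conjunct2, THEN conjunct1])
  have lorth: "\<And>l. l \<in> lines \<Longrightarrow> orthogonal_squares (G (X l)) (G (Y l)) (TD_square (G (Z l)) (Bl l)) (Lm l)"
    by (rule XYZ[THEN conjunct2, THEN conjunct2, THEN conjunct2, THEN conjunct2, THEN conjunct2, THEN conjunct2])
  have UN3: "\<And>(l::nat list set) x y z. l = {x,y,z} \<Longrightarrow> (\<Union>w\<in>l. G w) = G x \<union> G y \<union> G z" by (simp add: Un_assoc)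
  have MEM3: "\<And>(l::nat list set) x y z w. l = {x,y,z} \<Longrightarrow> w \<in> l \<longleftrightarrow> (w = x \<or> w = y \<or> w = z)" by simp
  have linepts: "\<And>l. l \<in> lines \<Longrightarrow> X l \<in> pts \<and> Y l \<in> pts \<and> Z l \<in> pts"
  proof -
    fix l assume l: "l \<in> lines"
    have "l \<subseteq> pts" using lines_sub l unfolding lines_def pts_def by blast
    moreover have "X l \<in> l" "Y l \<in> l" "Z l \<in> l" using MEM3[OF lX[OF l]] by simp_all
    ultimately show "X l \<in> pts \<and> Y l \<in> pts \<and> Z l \<in> pts" by blast
  qed
  have "\<forall>l\<in>lines. \<exists>h. bij_betw h {0..<T} (G (Z l))"
    using ex_bij_betw_nat_finite finG Gsub linepts by metis
  then obtain h where h: "\<And>l. l \<in> lines \<Longrightarrow> bij_betw (h l) {0..<T} (G (Z l))" by metis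
  define N where "N = (T - 1) div 2"
  have "\<forall>x\<in>pts. \<exists>R. is_resolution (G x) (Bx x) R"
    using assms(8) unfolding resolvable_def pts_def n_def by blast
  then obtain Rx where Rx: "\<And>x. x \<in> pts \<Longrightarrow> is_resolution (G x) (Bx x) (Rx x)" by metis
  have cardRx: "\<And>x. x \<in> pts \<Longrightarrow> card (Rx x) = N"
  proof -
    fix x assume x: "x \<in> pts"
    obtain p where "p \<in> G x" using Gne x by blast
    from resolution_card[OF Gsts[OF x] Rx[OF x] this] show "card (Rx x) = N"
      using Gsub x N_def by simp
  qed
  have finRx: "\<And>x. x \<in> pts \<Longrightarrow> finite (Rx x)"
  proof -
    fix x assume x: "x \<in> pts"
    have "Rx x \<subseteq> Pow (Pow (G x))" using Rx[OF x] Gsts[OF x]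
      unfolding is_resolution_def parallel_class_def is_STS_def by blast
    then show "finite (Rx x)" using finG[OF x] finite_subset by blast
  qed
  have "\<forall>x\<in>pts. \<exists>e. bij_betw e {0..<N} (Rx x)"
    using ex_bij_betw_nat_finite finRx cardRx by metis
  then obtain e where e: "\<And>x. x \<in> pts \<Longrightarrow> bij_betw (e x) {0..<N} (Rx x)" by metis
  have blkx: "\<And>x B. x \<in> pts \<Longrightarrow> B \<in> Bx x \<Longrightarrow> B \<subseteq> G x \<and> B \<noteq> {}"
  proof -
    fix x B assume "x \<in> pts" "B \<in> Bx x"
    then have "B \<subseteq> G x \<and> card B = 3" using Gsts unfolding is_STS_def by blast
    then show "B \<subseteq> G x \<and> B \<noteq> {}" by auto
  qed
  have blkl: "\<And>l B. l \<in> lines \<Longrightarrow> B \<in> Bl l \<Longrightarrow> \<exists>a\<in>G (X l). \<exists>b\<in>G (Y l). \<exists>c\<in>G (Z l). B = {a, b, c}"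
    using TD_blk[OF ltd] by blast
  have grpset: "\<And>l B. l \<in> lines \<Longrightarrow> B \<in> Bl l \<Longrightarrow> {w\<in>pts. B \<inter> G w \<noteq> {}} = l"
  proof -
    fix l B assume l: "l \<in> lines" and B: "B \<in> Bl l"
    obtain a b c where abc: "a\<in>G (X l)" "b\<in>G (Y l)" "c\<in>G (Z l)" "B = {a, b, c}" using blkl[OF l B] by blast
    have lp: "X l \<in> pts" "Y l \<in> pts" "Z l \<in> pts" using linepts[OF l] by auto
    show "{w\<in>pts. B \<inter> G w \<noteq> {}} = l"
    proof
      show "{w\<in>pts. B \<inter> G w \<noteq> {}} \<subseteq> l"
      proof clarify
        fix w assume w: "w \<in> pts" "B \<inter> G w \<noteq> {}"
        then have "a \<in> G w \<or> b \<in> G w \<or> c \<in> G w" using abc by auto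
        then have "w = X l \<or> w = Y l \<or> w = Z l" using Gdisj w(1) lp abc(1-3) by blast
        then show "w \<in> l" using MEM3[OF lX[OF l]] by simp
      qed
      show "l \<subseteq> {w\<in>pts. B \<inter> G w \<noteq> {}}"
      proof
        fix w assume "w \<in> l"
        then have "w = X l \<or> w = Y l \<or> w = Z l" using MEM3[OF lX[OF l]] by simp
        then show "w \<in> {w\<in>pts. B \<inter> G w \<noteq> {}}"
        proof (elim disjE)
          assume "w = X l" then show ?thesis using lp abc by blast
        next
          assume "w = Y l" then show ?thesis using lp abc by blast
        next
          assume "w = Z l" then show ?thesis using lp abc by blast
        qed
      qed
    qed
  qed
  have blksub: "\<And>l B. l \<in> lines \<Longrightarrow> B \<in> Bl l \<Longrightarrow> B \<subseteq> (\<Union>w\<in>l. G w)"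
  proof -
    fix l B assume l: "l \<in> lines" and B: "B \<in> Bl l"
    obtain a b c where abc: "a\<in>G (X l)" "b\<in>G (Y l)" "c\<in>G (Z l)" "B = {a, b, c}" using blkl[OF l B] by blast
    then show "B \<subseteq> (\<Union>w\<in>l. G w)" unfolding UN3[OF lX[OF l]] by blast
  qed
  define Tr where "Tr l i = {{a, b, TD_square (G (Z l)) (Bl l) a b} | a b. a \<in> G (X l) \<and> b \<in> G (Y l) \<and> Lm l a b = h l i}" for l i
  have Tr: "\<And>l i. l \<in> lines \<Longrightarrow> i < T \<Longrightarrow> Tr l i \<subseteq> Bl l \<and> \<Union>(Tr l i) = (\<Union>w\<in>l. G w) \<and>
      (\<forall>B\<in>Tr l i. \<forall>C\<in>Tr l i. B \<noteq> C \<longrightarrow> B \<inter> C = {})"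
  proof -
    fix l i assume l: "l \<in> lines" and i: "i < T"
    have s: "h l i \<in> G (Z l)" using h[OF l] i by (auto simp: bij_betw_def)
    have T2: "\<Union>(Tr l i) = G (X l) \<union> G (Y l) \<union> G (Z l)"
      unfolding Tr_def by (rule TD_trans(2)[OF ltd[OF l] lls[OF l] lorth[OF l] s])
    also have "\<dots> = (\<Union>w\<in>l. G w)" using UN3[OF lX[OF l]] by simp
    finally have T2': "\<Union>(Tr l i) = (\<Union>w\<in>l. G w)" .
    have T1: "Tr l i \<subseteq> Bl l" unfolding Tr_def by (rule TD_trans(1)[OF ltd[OF l] lls[OF l] lorth[OF l] s])
    have T3: "\<forall>B\<in>Tr l i. \<forall>C\<in>Tr l i. B \<noteq> C \<longrightarrow> B \<inter> C = {}"
      unfolding Tr_def using TD_trans(3)[OF ltd[OF l] lls[OF l] lorth[OF l] s] by blast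
    show "?thesis l i" using T1 T2' T3 by blast
  qed
  have Trne: "\<And>l i. l \<in> lines \<Longrightarrow> i < T \<Longrightarrow> Tr l i \<noteq> {}"
  proof -
    fix l i assume l: "l \<in> lines" and i: "i < T"
    have "G (X l) \<noteq> {}" using Gne linepts[OF l] by blast
    moreover have "X l \<in> l" using MEM3[OF lX[OF l]] by simp
    then have "G (X l) \<subseteq> \<Union>(Tr l i)" using Tr[OF l i] by blast
    ultimately show "Tr l i \<noteq> {}" by blast
  qed
  have Trcov: "\<And>l B. l \<in> lines \<Longrightarrow> B \<in> Bl l \<Longrightarrow> \<exists>i<T. B \<in> Tr l i"
  proof -
    fix l B assume l: "l \<in> lines" and B: "B \<in> Bl l"
    obtain a b where ab: "a \<in> G (X l)" "b \<in> G (Y l)" "B = {a, b, TD_square (G (Z l)) (Bl l) a b}"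
      using TD_cover[OF ltd[OF l] B] by blast
    have "Lm l a b \<in> G (Z l)" using lls[OF l] ab unfolding latin_square_def bij_betw_def by blast
    then have "Lm l a b \<in> h l ` {0..<T}" using h[OF l] unfolding bij_betw_def by simp
    then obtain i where "i \<in> {0..<T}" "Lm l a b = h l i" by (rule imageE)
    then have "i < T" "h l i = Lm l a b" by simp_all
    moreover have "B \<in> Tr l i" unfolding Tr_def
      by (intro CollectI exI[of _ a] exI[of _ b]) (simp add: ab \<open>h l i = Lm l a b\<close>)
    ultimately show "\<exists>i<T. B \<in> Tr l i" by blast
  qed
  have Trind: "\<And>l i i' B. l \<in> lines \<Longrightarrow> i < T \<Longrightarrow> i' < T \<Longrightarrow> B \<in> Tr l i \<Longrightarrow> B \<in> Tr l i' \<Longrightarrow> i = i'"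
  proof -
    fix l i i' B assume l: "l \<in> lines" and i: "i < T" "i' < T" and B: "B \<in> Tr l i" "B \<in> Tr l i'"
    obtain a b where ab: "a \<in> G (X l)" "b \<in> G (Y l)" "Lm l a b = h l i" "B = {a, b, TD_square (G (Z l)) (Bl l) a b}"
      using B(1) unfolding Tr_def by blast
    obtain a' b' where ab': "a' \<in> G (X l)" "b' \<in> G (Y l)" "Lm l a' b' = h l i'" "B = {a', b', TD_square (G (Z l)) (Bl l) a' b'}"
      using B(2) unfolding Tr_def by blast
    have lp: "X l \<in> pts" "Y l \<in> pts" "Z l \<in> pts" using linepts[OF l] by auto
    have dXY: "G (X l) \<inter> G (Y l) = {}" "G (X l) \<inter> G (Z l) = {}" "G (Y l) \<inter> G (Z l) = {}"
      using Gdisj lp ld1[OF l] ld2[OF l] ld3[OF l] by blast+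
    have c: "TD_square (G (Z l)) (Bl l) a b \<in> G (Z l)" "TD_square (G (Z l)) (Bl l) a' b' \<in> G (Z l)"
      using TD_sq(1)[OF ltd[OF l]] ab ab' by blast+
    have "a \<in> B" "b \<in> B" using ab(4) by simp_all
    then have ma: "a = a' \<or> a = b' \<or> a = TD_square (G (Z l)) (Bl l) a' b'"
      and mb: "b = a' \<or> b = b' \<or> b = TD_square (G (Z l)) (Bl l) a' b'" using ab'(4) by simp_all
    have "a \<noteq> b'" using ab(1) ab'(2) dXY(1) by blast
    moreover have "a \<noteq> TD_square (G (Z l)) (Bl l) a' b'" using ab(1) c(2) dXY(2) by blast
    ultimately have "a = a'" using ma by blast
    have "b \<noteq> a'" using ab(2) ab'(1) dXY(1) by blast
    moreover have "b \<noteq> TD_square (G (Z l)) (Bl l) a' b'" using ab(2) c(2) dXY(3) by blast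
    ultimately have "b = b'" using mb by blast
    have "h l i = h l i'" using ab(3) ab'(3) \<open>a = a'\<close> \<open>b = b'\<close> by simp
    then show "i = i'" using h[OF l] i unfolding bij_betw_def inj_on_def by auto
  qed
  define LC where "LC C i = (\<Union>l\<in>C. Tr l i)" for C i
  define BC where "BC j = (\<Union>x\<in>pts. e x j)" for j
  define Cls where "Cls = Par n ` lines"
  define R where "R = BC ` {0..<N} \<union> {LC C i | C i. C \<in> Cls \<and> i < T}"
  have Clsl: "\<And>C. C \<in> Cls \<Longrightarrow> C \<subseteq> lines \<and> C \<noteq> {} \<and> (\<forall>l\<in>C. Par n l = C)"
    unfolding Cls_def lines_def using Par_sub Par_self Par_eq by blast
  have ex: "\<And>x j. x \<in> pts \<Longrightarrow> j < N \<Longrightarrow> e x j \<in> Rx x"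
  proof -
    fix x j assume x: "x \<in> pts" and j: "j < N"
    then have "j \<in> {0..<N}" by simp
    then show "e x j \<in> Rx x" using bij_betwE[OF e[OF x]] by blast
  qed
  have expc: "\<And>x j. x \<in> pts \<Longrightarrow> j < N \<Longrightarrow> parallel_class (G x) (Bx x) (e x j) \<and> e x j \<noteq> {}"
  proof -
    fix x j assume x: "x \<in> pts" and j: "j < N"
    have "\<forall>\<pi>\<in>Rx x. parallel_class (G x) (Bx x) \<pi> \<and> \<pi> \<noteq> {}"
      using Rx[OF x] unfolding is_resolution_def by (rule conjunct1)
    then show "parallel_class (G x) (Bx x) (e x j) \<and> e x j \<noteq> {}" using ex[OF x j] by (rule bspec)
  qed
  have BCpc: "\<And>j. j < N \<Longrightarrow> parallel_class P Bs (BC j) \<and> BC j \<noteq> {}"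
  proof -
    fix j assume j: "j < N"
    have pcx: "e x j \<subseteq> Bx x \<and> \<Union>(e x j) = G x \<and> (\<forall>B\<in>e x j. \<forall>C\<in>e x j. B \<noteq> C \<longrightarrow> B \<inter> C = {})"
      if x: "x \<in> pts" for x
    proof -
      have "parallel_class (G x) (Bx x) (e x j)" using expc[OF x j] by (rule conjunct1)
      then show ?thesis unfolding parallel_class_def by (elim conjE) (intro conjI)
    qed
    have "BC j \<subseteq> Bs"
    proof
      fix B assume "B \<in> BC j"
      then obtain x where x: "x \<in> pts" "B \<in> e x j" unfolding BC_def by blast
      then have "B \<in> Bx x" using pcx[OF x(1)] by blast
      then show "B \<in> Bs" using x(1) unfolding Bseq by blast
    qed
    moreover have "\<Union>(BC j) = P"
    proof -
      have "\<Union>(BC j) = (\<Union>x\<in>pts. \<Union>(e x j))" unfolding BC_def by blast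
      also have "\<dots> = (\<Union>x\<in>pts. G x)" using pcx by simp
      finally show ?thesis using Gun by simp
    qed
    moreover have "\<forall>B\<in>BC j. \<forall>C\<in>BC j. B \<noteq> C \<longrightarrow> B \<inter> C = {}"
    proof (intro ballI impI)
      fix B C assume B: "B \<in> BC j" and C: "C \<in> BC j" and ne: "B \<noteq> C"
      obtain x where x: "x \<in> pts" "B \<in> e x j" using B unfolding BC_def by blast
      obtain y where y: "y \<in> pts" "C \<in> e y j" using C unfolding BC_def by blast
      show "B \<inter> C = {}"
      proof (cases "x = y")
        case True
        then have Cx: "C \<in> e x j" using y(2) by simp
        have D: "\<forall>B\<in>e x j. \<forall>C\<in>e x j. B \<noteq> C \<longrightarrow> B \<inter> C = {}" using pcx[OF x(1)] by (elim conjE)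
        show ?thesis by (rule bspec[OF bspec[OF D x(2)] Cx, THEN mp, OF ne])
      next
        case False
        have s1: "e x j \<subseteq> Bx x" using pcx[OF x(1)] by (rule conjunct1)
        have s2: "e y j \<subseteq> Bx y" using pcx[OF y(1)] by (rule conjunct1)
        have "B \<in> Bx x" using s1 x(2) by (rule subsetD)
        then have g1: "B \<subseteq> G x" using blkx[OF x(1)] by blast
        have "C \<in> Bx y" using s2 y(2) by (rule subsetD)
        then have g2: "C \<subseteq> G y" using blkx[OF y(1)] by blast
        have "G x \<inter> G y = {}" by (rule Gdisj[OF x(1) y(1) False])
        then show ?thesis using g1 g2 by blast
      qed
    qed
    moreover have "BC j \<noteq> {}"
    proof -
      have "e (replicate n 0) j \<noteq> {}" using expc[OF ptsne j] by (rule conjunct2)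
      then show ?thesis using ptsne unfolding BC_def by blast
    qed
    ultimately show "parallel_class P Bs (BC j) \<and> BC j \<noteq> {}" unfolding parallel_class_def by (intro conjI)
  qed
  have TrS: "\<And>l i. l \<in> lines \<Longrightarrow> i < T \<Longrightarrow> Tr l i \<subseteq> Bl l" by (rule Tr[THEN conjunct1])
  have TrU: "\<And>l i. l \<in> lines \<Longrightarrow> i < T \<Longrightarrow> \<Union>(Tr l i) = (\<Union>w\<in>l. G w)" by (rule Tr[THEN conjunct2, THEN conjunct1])
  have TrD: "\<And>l i. l \<in> lines \<Longrightarrow> i < T \<Longrightarrow> \<forall>B\<in>Tr l i. \<forall>C\<in>Tr l i. B \<noteq> C \<longrightarrow> B \<inter> C = {}"
    by (rule Tr[THEN conjunct2, THEN conjunct2])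
  have ClL: "\<And>C. C \<in> Cls \<Longrightarrow> C \<subseteq> lines" by (rule Clsl[THEN conjunct1])
  have ClN: "\<And>C. C \<in> Cls \<Longrightarrow> C \<noteq> {}" by (rule Clsl[THEN conjunct2, THEN conjunct1])
  have ClP: "\<And>C. C \<in> Cls \<Longrightarrow> \<forall>l\<in>C. Par n l = C" by (rule Clsl[THEN conjunct2, THEN conjunct2])
  have ptsl: "\<And>l. l \<in> lines \<Longrightarrow> l \<subseteq> pts" using lines_sub unfolding lines_def pts_def by blast
  have LCinv: "\<And>C i B. C \<in> Cls \<Longrightarrow> i < T \<Longrightarrow> B \<in> LC C i \<Longrightarrow> \<exists>l\<in>C. B \<in> Bl l \<and> B \<in> Tr l i"
  proof -
    fix C i B assume C: "C \<in> Cls" and i: "i < T" and B: "B \<in> LC C i"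
    then obtain l where l: "l \<in> C" "B \<in> Tr l i" unfolding LC_def by blast
    then have "l \<in> lines" using ClL[OF C] by blast
    then have "B \<in> Bl l" using TrS[OF _ i] l(2) by blast
    then show "\<exists>l\<in>C. B \<in> Bl l \<and> B \<in> Tr l i" using l by blast
  qed
  have LCpc: "\<And>C i. C \<in> Cls \<Longrightarrow> i < T \<Longrightarrow> parallel_class P Bs (LC C i) \<and> LC C i \<noteq> {}"
  proof -
    fix C i assume C: "C \<in> Cls" and i: "i < T"
    have CL: "C \<subseteq> lines" by (rule ClL[OF C])
    have "LC C i \<subseteq> Bs"
    proof
      fix B assume "B \<in> LC C i"
      then obtain l where "l \<in> C" "B \<in> Bl l" using LCinv[OF C i] by blast
      moreover then have "l \<in> lines" using CL by blast
      ultimately show "B \<in> Bs" unfolding Bseq by blast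
    qed
    moreover have "\<Union>(LC C i) = P"
    proof -
      have "\<Union>(LC C i) = (\<Union>l\<in>C. \<Union>(Tr l i))" unfolding LC_def by blast
      also have "\<dots> = (\<Union>l\<in>C. \<Union>w\<in>l. G w)"
      proof (rule SUP_cong)
        fix l assume "l \<in> C"
        then have "l \<in> lines" using CL by blast
        then show "\<Union>(Tr l i) = (\<Union>w\<in>l. G w)" by (rule TrU[OF _ i])
      qed simp
      also have "\<dots> = (\<Union>w\<in>pts. G w)"
      proof
        show "(\<Union>l\<in>C. \<Union>w\<in>l. G w) \<subseteq> (\<Union>w\<in>pts. G w)"
        proof
          fix q assume "q \<in> (\<Union>l\<in>C. \<Union>w\<in>l. G w)"
          then obtain l w where lw: "l \<in> C" "w \<in> l" "q \<in> G w" by blast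
          then have "l \<in> lines" using CL by blast
          then have "w \<in> pts" using ptsl lw(2) by blast
          then show "q \<in> (\<Union>w\<in>pts. G w)" using lw(3) by blast
        qed
        show "(\<Union>w\<in>pts. G w) \<subseteq> (\<Union>l\<in>C. \<Union>w\<in>l. G w)"
        proof
          fix q assume "q \<in> (\<Union>w\<in>pts. G w)"
          then obtain w where w: "w \<in> pts" "q \<in> G w" by blast
          obtain l0 where l0: "l0 \<in> C" using ClN[OF C] by blast
          then have l0l: "l0 \<in> lines" using CL by blast
          have "Par n l0 = C" using ClP[OF C] l0 by blast
          moreover have "\<exists>l'\<in>Par n l0. w \<in> l'" using Par_cover[of l0 n w] l0l w(1) unfolding lines_def pts_def by blast
          ultimately obtain l where "l \<in> C" "w \<in> l" by blast
          then show "q \<in> (\<Union>l\<in>C. \<Union>w\<in>l. G w)" using w(2) by blast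
        qed
      qed
      finally show ?thesis using Gun by simp
    qed
    moreover have "\<forall>B\<in>LC C i. \<forall>D\<in>LC C i. B \<noteq> D \<longrightarrow> B \<inter> D = {}"
    proof (intro ballI impI)
      fix B D assume B: "B \<in> LC C i" and D: "D \<in> LC C i" and ne: "B \<noteq> D"
      obtain l where l: "l \<in> C" "B \<in> Tr l i" "B \<in> Bl l" using LCinv[OF C i B] by blast
      obtain l' where l': "l' \<in> C" "D \<in> Tr l' i" "D \<in> Bl l'" using LCinv[OF C i D] by blast
      have ll: "l \<in> lines" "l' \<in> lines" using l(1) l'(1) CL by blast+
      show "B \<inter> D = {}"
      proof (cases "l = l'")
        case True
        then have D': "D \<in> Tr l i" using l'(2) by simp
        show ?thesis by (rule bspec[OF bspec[OF TrD[OF ll(1) i] l(2)] D', THEN mp, OF ne])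
      next
        case False
        have "l \<inter> l' = {}"
        proof (rule ccontr)
          assume "l \<inter> l' \<noteq> {}"
          then obtain p where p: "p \<in> l" "p \<in> l'" by blast
          have PC: "Par n l = C" using ClP[OF C] l(1) by blast
          have "l \<in> Par n l" "l' \<in> Par n l" using PC l(1) l'(1) by simp_all
          then have "l = l'" using Par_disj[of l n l l' p] ll(1) p unfolding lines_def by blast
          then show False using False by simp
        qed
        moreover have "B \<subseteq> (\<Union>w\<in>l. G w)" by (rule blksub[OF ll(1) l(3)])
        moreover have "D \<subseteq> (\<Union>w\<in>l'. G w)" by (rule blksub[OF ll(2) l'(3)])
        moreover have "l \<subseteq> pts" "l' \<subseteq> pts" using ptsl ll by blast+
        ultimately show ?thesis using Gdisj by blast
      qed
    qed
    moreover have "LC C i \<noteq> {}"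
    proof -
      obtain l0 where l0: "l0 \<in> C" using ClN[OF C] by blast
      then have "l0 \<in> lines" using CL by blast
      then have "Tr l0 i \<noteq> {}" using Trne[OF _ i] by blast
      then show ?thesis using l0 unfolding LC_def by blast
    qed
    ultimately show "parallel_class P Bs (LC C i) \<and> LC C i \<noteq> {}" unfolding parallel_class_def by (intro conjI)
  qed
  have BCinv: "\<And>j B. j < N \<Longrightarrow> B \<in> BC j \<Longrightarrow> \<exists>x\<in>pts. B \<in> Bx x \<and> B \<in> e x j"
  proof -
    fix j B assume j: "j < N" and B: "B \<in> BC j"
    then obtain x where x: "x \<in> pts" "B \<in> e x j" unfolding BC_def by blast
    have "parallel_class (G x) (Bx x) (e x j)" using expc[OF x(1) j] by (rule conjunct1)
    then have "e x j \<subseteq> Bx x" unfolding parallel_class_def by (rule conjunct1)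
    then have "B \<in> Bx x" using x(2) by blast
    then show "\<exists>x\<in>pts. B \<in> Bx x \<and> B \<in> e x j" using x by blast
  qed
  have Rcases: "\<And>\<pi>. \<pi> \<in> R \<Longrightarrow> (\<exists>j. j < N \<and> \<pi> = BC j) \<or> (\<exists>C i. C \<in> Cls \<and> i < T \<and> \<pi> = LC C i)"
    unfolding R_def by auto
  have Rpc: "\<And>\<pi>. \<pi> \<in> R \<Longrightarrow> parallel_class P Bs \<pi> \<and> \<pi> \<noteq> {}"
  proof -
    fix \<pi> assume "\<pi> \<in> R"
    from Rcases[OF this] show "parallel_class P Bs \<pi> \<and> \<pi> \<noteq> {}"
    proof (elim disjE exE conjE)
      fix j assume "j < N" "\<pi> = BC j"
      then show ?thesis using BCpc by simp
    next
      fix C i assume "C \<in> Cls" "i < T" "\<pi> = LC C i"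
      then show ?thesis using LCpc by simp
    qed
  qed
  have BCR: "\<And>j. j < N \<Longrightarrow> BC j \<in> R" unfolding R_def by simp
  have LCR: "\<And>C i. C \<in> Cls \<Longrightarrow> i < T \<Longrightarrow> LC C i \<in> R" unfolding R_def by blast
  have res: "is_resolution P Bs R"
    unfolding is_resolution_def
  proof (intro conjI ballI impI)
    fix \<pi> assume "\<pi> \<in> R"
    then show "parallel_class P Bs \<pi>" "\<pi> \<noteq> {}" using Rpc by simp_all
  next
    show "\<Union>R = Bs"
    proof
      show "\<Union>R \<subseteq> Bs"
      proof
        fix B assume "B \<in> \<Union>R"
        then obtain \<pi> where pi: "\<pi> \<in> R" "B \<in> \<pi>" by blast
        have "parallel_class P Bs \<pi>" using Rpc[OF pi(1)] by simp
        then have "\<pi> \<subseteq> Bs" unfolding parallel_class_def by (rule conjunct1)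
        then show "B \<in> Bs" using pi(2) by blast
      qed
      show "Bs \<subseteq> \<Union>R"
      proof
        fix B assume "B \<in> Bs"
        then consider x where "x \<in> pts" "B \<in> Bx x" | l where "l \<in> lines" "B \<in> Bl l" unfolding Bseq by blast
        then show "B \<in> \<Union>R"
        proof cases
          case 1
          have "\<Union>(Rx x) = Bx x" using Rx[OF 1(1)] unfolding is_resolution_def by (elim conjE)
          then obtain \<pi> where "\<pi> \<in> Rx x" "B \<in> \<pi>" using 1(2) by blast
          then have "\<pi> \<in> e x ` {0..<N}" using e[OF 1(1)] unfolding bij_betw_def by simp
          then obtain j where "j \<in> {0..<N}" "\<pi> = e x j" by (rule imageE)
          then have jN: "j < N" and "e x j = \<pi>" by simp_all
          then have "B \<in> BC j" using 1 \<open>B \<in> \<pi>\<close> unfolding BC_def by blast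
          then show ?thesis using BCR[OF jN] by blast
        next
          case 2
          then obtain i where iT: "i < T" and Bi: "B \<in> Tr l i" using Trcov by blast
          have "l \<in> Par n l" using Par_self 2(1) unfolding lines_def by blast
          moreover have PC: "Par n l \<in> Cls" using 2(1) unfolding Cls_def by blast
          ultimately have "B \<in> LC (Par n l) i" using Bi unfolding LC_def by blast
          then show ?thesis using LCR[OF PC iT] by blast
        qed
      qed
    qed
  next
    fix \<pi> \<sigma> assume pi: "\<pi> \<in> R" and si: "\<sigma> \<in> R" and ne: "\<pi> \<noteq> \<sigma>"
    show "\<pi> \<inter> \<sigma> = {}"
    proof (rule ccontr)
      assume "\<pi> \<inter> \<sigma> \<noteq> {}"
      then obtain B where B: "B \<in> \<pi>" "B \<in> \<sigma>" by blast
      have xl: False if hyp: "x \<in> pts" "B \<in> Bx x" "l \<in> lines" "B \<in> Bl l" for x l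
      proof -
        obtain a b c where abc: "a\<in>G (X l)" "b\<in>G (Y l)" "c\<in>G (Z l)" "B = {a, b, c}" using blkl hyp(3,4) by blast
        have "B \<subseteq> G x" using blkx[OF hyp(1,2)] by (rule conjunct1)
        then have ax: "a \<in> G x" and bx: "b \<in> G x" using abc(4) by blast+
        have lp: "X l \<in> pts" "Y l \<in> pts" using linepts[OF hyp(3)] by simp_all
        have "x = X l"
        proof (rule ccontr)
          assume "x \<noteq> X l"
          then have "G x \<inter> G (X l) = {}" using Gdisj[OF hyp(1) lp(1)] by blast
          then show False using ax abc(1) by blast
        qed
        moreover have "x = Y l"
        proof (rule ccontr)
          assume "x \<noteq> Y l"
          then have "G x \<inter> G (Y l) = {}" using Gdisj[OF hyp(1) lp(2)] by blast
          then show False using bx abc(2) by blast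
        qed
        ultimately show False using ld1[OF hyp(3)] by simp
      qed
      have bcbc: "BC j = BC j'" if hyp: "j < N" "j' < N" "B \<in> BC j" "B \<in> BC j'" for j j'
      proof -
        obtain x where x: "x \<in> pts" "B \<in> Bx x" "B \<in> e x j" using BCinv[OF hyp(1,3)] by blast
        obtain y where y: "y \<in> pts" "B \<in> Bx y" "B \<in> e y j'" using BCinv[OF hyp(2,4)] by blast
        have bx: "B \<subseteq> G x" "B \<noteq> {}" using blkx[OF x(1,2)] by simp_all
        have by': "B \<subseteq> G y" using blkx[OF y(1,2)] by simp
        have "x = y"
        proof (rule ccontr)
          assume "x \<noteq> y"
          then have "G x \<inter> G y = {}" by (rule Gdisj[OF x(1) y(1)])
          then show False using bx by' by blast
        qed
        have "e x j = e x j'"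
        proof (rule ccontr)
          assume nej: "e x j \<noteq> e x j'"
          have D: "\<forall>\<pi>\<in>Rx x. \<forall>\<sigma>\<in>Rx x. \<pi> \<noteq> \<sigma> \<longrightarrow> \<pi> \<inter> \<sigma> = {}"
            using Rx[OF x(1)] unfolding is_resolution_def by (elim conjE)
          have "e x j \<inter> e x j' = {}"
            by (rule bspec[OF bspec[OF D ex[OF x(1) hyp(1)]] ex[OF x(1) hyp(2)], THEN mp, OF nej])
          then show False using x(3) y(3) \<open>x = y\<close> by blast
        qed
        moreover have "j \<in> {0..<N}" "j' \<in> {0..<N}" using hyp(1,2) by simp_all
        ultimately have "j = j'" using inj_onD[OF bij_betw_imp_inj_on[OF e[OF x(1)]]] by blast
        then show ?thesis by simp
      qed
      have lclc: "LC C i = LC C' i'" if hyp: "C \<in> Cls" "i < T" "C' \<in> Cls" "i' < T" "B \<in> LC C i" "B \<in> LC C' i'" for C i C' i'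
      proof -
        obtain l where l: "l \<in> C" "B \<in> Bl l" "B \<in> Tr l i" using LCinv[OF hyp(1,2,5)] by blast
        obtain l' where l': "l' \<in> C'" "B \<in> Bl l'" "B \<in> Tr l' i'" using LCinv[OF hyp(3,4,6)] by blast
        have ll: "l \<in> lines" "l' \<in> lines" using ClL[OF hyp(1)] ClL[OF hyp(3)] l(1) l'(1) by blast+
        have "l = l'" using grpset[OF ll(1) l(2)] grpset[OF ll(2) l'(2)] by simp
        have "Par n l = C" using ClP[OF hyp(1)] l(1) by blast
        moreover have "Par n l' = C'" using ClP[OF hyp(3)] l'(1) by blast
        ultimately have "C = C'" using \<open>l = l'\<close> by simp
        moreover have "i = i'" using Trind[OF ll(1) hyp(2,4) l(3)] l'(3) \<open>l = l'\<close> by simp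
        ultimately show ?thesis by simp
      qed
      have BCl: "\<exists>x\<in>pts. B \<in> Bx x" if "j < N" "B \<in> BC j" for j
        using BCinv[OF that] by blast
      have LCl: "\<exists>l\<in>lines. B \<in> Bl l" if hq: "C \<in> Cls" "i < T" "B \<in> LC C i" for C i
      proof -
        obtain l where "l \<in> C" "B \<in> Bl l" using LCinv[OF hq] by blast
        then show ?thesis using ClL[OF hq(1)] by blast
      qed
      from Rcases[OF pi] show False
      proof (elim disjE exE conjE)
        fix j assume j: "j < N" "\<pi> = BC j"
        from Rcases[OF si] show False
        proof (elim disjE exE conjE)
          fix j' assume j': "j' < N" "\<sigma> = BC j'"
          have "BC j = BC j'" using bcbc[OF j(1) j'(1)] B j(2) j'(2) by simp
          then show False using ne j(2) j'(2) by simp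
        next
          fix C i assume Ci: "C \<in> Cls" "i < T" "\<sigma> = LC C i"
          obtain x where x: "x \<in> pts" "B \<in> Bx x" using BCl[OF j(1)] B(1) j(2) by blast
          obtain l where l: "l \<in> lines" "B \<in> Bl l" using LCl[OF Ci(1,2)] B(2) Ci(3) by blast
          show False by (rule xl[OF x l])
        qed
      next
        fix C i assume Ci: "C \<in> Cls" "i < T" "\<pi> = LC C i"
        from Rcases[OF si] show False
        proof (elim disjE exE conjE)
          fix j' assume j': "j' < N" "\<sigma> = BC j'"
          obtain x where x: "x \<in> pts" "B \<in> Bx x" using BCl[OF j'(1)] B(2) j'(2) by blast
          obtain l where l: "l \<in> lines" "B \<in> Bl l" using LCl[OF Ci(1,2)] B(1) Ci(3) by blast
          show False by (rule xl[OF x l])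
        next
          fix C' i' assume Ci': "C' \<in> Cls" "i' < T" "\<sigma> = LC C' i'"
          have "LC C i = LC C' i'" using lclc[OF Ci(1,2) Ci'(1,2)] B Ci(3) Ci'(3) by simp
          then show False using ne Ci(3) Ci'(3) by simp
        qed
      qed
    qed
  qed
  obtain p where "p \<in> P" using Gun Gne ptsne by blast
  from resolution_card[OF assms(4) res this] have "card R = (3 ^ k - 1) div 2" using assms(5) by simp
  then show ?thesis using res unfolding resolvable_def by blast
qed
end
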